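(* Assume $\lambda\mathbb{E}[Y_1]>\rho$ and $\delta>0$. For $T>0$ and $x>0$ let $V(x;T)=\sup_{D\in\mathcal{D}}\mathbb{E}_x\left[\int_0^{T\wedge\tau}e^{-\delta t}dD_t\right]$. Then for all $T>0$, $$\left|V(x;T)-\sup_{D\in\mathcal{D}}\mathbb{E}_x\left[\int_0^{\tau}e^{-\delta t}dD_t\right]\right|\le (x+\lambda\mathbb{E}[Y_1]T)e^{-\delta T}+\frac{\lambda\mathbb{E}[Y_1]}{\delta}e^{-\delta T}.$$
   Context: Dual risk model: $\rho>0$, $\lambda>0$; $N_t$ is a Poisson process with intensity $\lambda$ and $J_t=\sum_{i=1}^{N_t}Y_i$, where $Y_i$ are i.i.d. positive random variables with common density $p(y)$, $y>0$, independent of $N$. Given a dividend strategy $D$, the surplus is $X_t=x-\rho t-D_t+J_t$, $X_0=x>0$. $\mathcal{D}$ is the set of admissible dividend strategies: all adapted nondecreasing càdlàg processes $D$ ($D_t$ is the cumulative dividend paid up to time $t$). The ruin time is $\tau=\inf\{t>0:X_t\le 0\}$. $\mathbb{E}_x$ denotes expectation with $X_0=x$. *)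

theory Defs
  imports "HOL-Probability.Probability"
begin

definition arrival_count :: "(nat \<Rightarrow> 'a \<Rightarrow> real) \<Rightarrow> real \<Rightarrow> 'a \<Rightarrow> nat" where
  "arrival_count W t \<omega> = card {n::nat. 1 \<le> n \<and> (\<Sum>i<n. W i \<omega>) \<le> t}"

definition comp_poisson ::
  "(nat \<Rightarrow> 'a \<Rightarrow> real) \<Rightarrow> (nat \<Rightarrow> 'a \<Rightarrow> real) \<Rightarrow> real \<Rightarrow> 'a \<Rightarrow> real" where
  "comp_poisson W Y t \<omega> = (\<Sum>i<arrival_count W t \<omega>. Y i \<omega>)"

definition surplus ::
  "(nat \<Rightarrow> 'a \<Rightarrow> real) \<Rightarrow> (nat \<Rightarrow> 'a \<Rightarrow> real) \<Rightarrow> real \<Rightarrow> real \<Rightarrow> (real \<Rightarrow> 'a \<Rightarrow> real)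
    \<Rightarrow> real \<Rightarrow> 'a \<Rightarrow> real" where
  "surplus W Y \<rho> x D t \<omega> = x - \<rho> * t - D t \<omega> + comp_poisson W Y t \<omega>"

definition ruin_time :: "(real \<Rightarrow> 'a \<Rightarrow> real) \<Rightarrow> 'a \<Rightarrow> ereal" where
  "ruin_time X \<omega> = Inf {ereal t | t. 0 < t \<and> X t \<omega> \<le> 0}"

definition nat_filtration ::
  "'a measure \<Rightarrow> (nat \<Rightarrow> 'a \<Rightarrow> real) \<Rightarrow> (nat \<Rightarrow> 'a \<Rightarrow> real) \<Rightarrow> real \<Rightarrow> 'a measure" where
  "nat_filtration M W Y t = sigma (space M)
     ({(\<lambda>\<omega>. real (arrival_count W s \<omega>)) -` A \<inter> space M | s A. 0 \<le> s \<and> s \<le> t \<and> A \<in> sets borel}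
      \<union> {comp_poisson W Y s -` A \<inter> space M | s A. 0 \<le> s \<and> s \<le> t \<and> A \<in> sets borel})"

text \<open>Admissible dividend strategies: adapted, nonnegative, nondecreasing, right-continuous
  (left limits exist by monotonicity) cumulative dividend processes with D_(0-) = 0,
  such that a dividend payment never drives the surplus below 0 (X_t >= 0 for t <= tau).\<close>
definition admissible ::
  "'a measure \<Rightarrow> (nat \<Rightarrow> 'a \<Rightarrow> real) \<Rightarrow> (nat \<Rightarrow> 'a \<Rightarrow> real) \<Rightarrow> real \<Rightarrow> real
     \<Rightarrow> (real \<Rightarrow> 'a \<Rightarrow> real) set" where
  "admissible M W Y \<rho> x = {D.
     (\<forall>t\<ge>0. D t \<in> borel_measurable (nat_filtration M W Y t)) \<and>
     (\<forall>\<omega>\<in>space M.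
        0 \<le> D 0 \<omega> \<and> mono_on {0..} (\<lambda>t. D t \<omega>) \<and>
        (\<forall>t\<ge>0. continuous (at_right t) (\<lambda>s. D s \<omega>)) \<and>
        (\<forall>t\<ge>0. ereal t \<le> ruin_time (surplus W Y \<rho> x D) \<omega> \<longrightarrow> 0 \<le> surplus W Y \<rho> x D t \<omega>))}"

text \<open>Lebesgue--Stieltjes measure dD of a path (with D_(0-) = 0, so an initial lump D_0 sits at 0).\<close>
definition div_measure :: "(real \<Rightarrow> 'a \<Rightarrow> real) \<Rightarrow> 'a \<Rightarrow> real measure" where
  "div_measure D \<omega> = interval_measure (\<lambda>t. if t < 0 then 0 else D t \<omega>)"

definition disc_dividends :: "real \<Rightarrow> (real \<Rightarrow> 'a \<Rightarrow> real) \<Rightarrow> ereal \<Rightarrow> 'a \<Rightarrow> ennreal" where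
  "disc_dividends \<delta> D S \<omega> =
     (\<integral>\<^sup>+ t \<in> {t. 0 \<le> t \<and> ereal t \<le> S}. ennreal (exp (- \<delta> * t)) \<partial>div_measure D \<omega>)"

text \<open>Value function with horizon H (H = T gives V(x;T), H = infinity gives the infinite-horizon value):
  sup over admissible D of E_x[ integral_[0, tau /\ H] e^(-delta t) dD_t ].\<close>
definition value_fn ::
  "'a measure \<Rightarrow> (nat \<Rightarrow> 'a \<Rightarrow> real) \<Rightarrow> (nat \<Rightarrow> 'a \<Rightarrow> real) \<Rightarrow> real \<Rightarrow> real \<Rightarrow> real \<Rightarrow> ereal
     \<Rightarrow> ennreal" where
  "value_fn M W Y \<rho> \<delta> x H = (SUP D \<in> admissible M W Y \<rho> x.
      \<integral>\<^sup>+ \<omega>. disc_dividends \<delta> D (min (ruin_time (surplus W Y \<rho> x D) \<omega>) H) \<omega> \<partial>M)"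

end

theory Submission
  imports Defs "HOL-Real_Asymp.Real_Asymp"
begin


lemma nn_integral_add_le_meas:
  assumes h[measurable]: "h \<in> borel_measurable M"
  shows "(\<integral>\<^sup>+x. g x + h x \<partial>M) \<le> integral\<^sup>N M g + integral\<^sup>N M h"
proof -
  have "integral\<^sup>S M s \<le> integral\<^sup>N M g + integral\<^sup>N M h"
    if s: "simple_function M s" "s \<le> (\<lambda>x. g x + h x)" "\<forall>x. s x < top" for s
  proof -
    have sm[measurable]: "s \<in> borel_measurable M" using s(1) by (rule borel_measurable_simple_function)
    have "integral\<^sup>S M s = integral\<^sup>N M s" using s(1) by (simp add: nn_integral_eq_simple_integral)
    also have "\<dots> \<le> (\<integral>\<^sup>+x. (s x - h x) + h x \<partial>M)"
      by (intro nn_integral_mono) (metis add.commute diff_le_self_ennreal le_iff_add order.refl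
              ennreal_minus_le_iff diff_add_self_ennreal)
    also have "\<dots> = (\<integral>\<^sup>+x. (s x - h x) \<partial>M) + integral\<^sup>N M h"
      by (rule nn_integral_add) auto
    also have "(\<integral>\<^sup>+x. (s x - h x) \<partial>M) \<le> integral\<^sup>N M g"
    proof (intro nn_integral_mono)
      fix x have "s x \<le> g x + h x" using s(2) by (auto simp: le_fun_def)
      then show "s x - h x \<le> g x" using s(3) by (auto simp: ennreal_minus_le_iff add.commute dest: spec[of _ x])
    qed
    finally show ?thesis by (simp add: add_right_mono)
  qed
  then show ?thesis unfolding nn_integral_def_finite[of M "\<lambda>x. g x + h x"]
    by (intro SUP_least) auto
qed



lemma exp_as_integral:
  fixes \<delta> t :: real assumes "\<delta> > 0"
  shows "ennreal (exp (- \<delta> * t)) = (\<integral>\<^sup>+u. ennreal (\<delta> * exp (- \<delta> * u)) * indicator {t..} u \<partial>lborel)"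
proof -
  have "(\<integral>\<^sup>+u. ennreal (\<delta> * exp (- \<delta> * u)) * indicator {t..} u \<partial>lborel) = 0 - (- exp (- \<delta> * t))"
  proof (rule nn_integral_FTC_atLeast)
    show "(\<lambda>u. \<delta> * exp (- \<delta> * u)) \<in> borel_measurable borel" by measurable
    show "((\<lambda>u. - exp (- \<delta> * u)) has_real_derivative \<delta> * exp (- \<delta> * u)) (at u)" for u
      by (auto intro!: derivative_eq_intros)
    show "0 \<le> \<delta> * exp (- \<delta> * u)" for u using assms by simp
    show "((\<lambda>u. - exp (- \<delta> * u)) \<longlongrightarrow> 0) at_top" using assms by real_asymp
  qed
  then show ?thesis by simp
qed

lemma tail_integral:
  fixes \<delta> T x m :: real assumes "\<delta> > 0" "x \<ge> 0" "m \<ge> 0" "T \<ge> 0"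
  shows "(\<integral>\<^sup>+u. ennreal (\<delta> * exp (- \<delta> * u) * (x + m * u)) * indicator {T..} u \<partial>lborel)
     = ennreal ((x + m * T) * exp (- \<delta> * T) + m / \<delta> * exp (- \<delta> * T))"
proof -
  define F where "F u = - exp (- \<delta> * u) * (x + m * u) - m / \<delta> * exp (- \<delta> * u)" for u
  have "(\<integral>\<^sup>+u. ennreal (\<delta> * exp (- \<delta> * u) * (x + m * u)) * indicator {T..} u \<partial>lborel) = 0 - F T"
  proof (rule nn_integral_FTC_atLeast)
    show "(\<lambda>u. \<delta> * exp (- \<delta> * u) * (x + m * u)) \<in> borel_measurable borel" by measurable
    show "(F has_real_derivative \<delta> * exp (- \<delta> * u) * (x + m * u)) (at u)" if "T \<le> u" for u
      unfolding F_def using assms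
      by (auto intro!: derivative_eq_intros simp: field_simps)
    show "0 \<le> \<delta> * exp (- \<delta> * u) * (x + m * u)" if "T \<le> u" for u
      using assms that by (intro mult_nonneg_nonneg add_nonneg_nonneg) auto
    show "(F \<longlongrightarrow> 0) at_top" unfolding F_def using assms by real_asymp
  qed
  also have "0 - F T = (x + m * T) * exp (- \<delta> * T) + m / \<delta> * exp (- \<delta> * T)"
    unfolding F_def by (simp add: algebra_simps)
  finally show ?thesis .
qed


definition Jp :: "(nat \<Rightarrow> 'a \<Rightarrow> real) \<Rightarrow> (nat \<Rightarrow> 'a \<Rightarrow> real) \<Rightarrow> real \<Rightarrow> 'a \<Rightarrow> ennreal" where
  "Jp W Y u \<omega> = (\<Sum>i. ennreal (Y i \<omega>) * indicator {..u} (\<Sum>j<Suc i. W j \<omega>))"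

lemma comp_le_Jp:
  assumes W: "\<And>i. W i \<omega> \<ge> 0" and Y: "\<And>i. Y i \<omega> \<ge> 0" and vu: "v \<le> u"
  shows "ennreal (comp_poisson W Y v \<omega>) \<le> Jp W Y u \<omega>"
proof -
  define A where "A = {n::nat. 1 \<le> n \<and> (\<Sum>i<n. W i \<omega>) \<le> v}"
  have monoS: "(\<Sum>i<m. W i \<omega>) \<le> (\<Sum>i<n. W i \<omega>)" if "m \<le> n" for m n
    using that W by (intro sum_mono2) auto
  have AC: "arrival_count W v \<omega> = card A" by (simp add: arrival_count_def A_def)
  show ?thesis
  proof (cases "finite A")
    case False
    then have "comp_poisson W Y v \<omega> = 0"
      by (simp add: comp_poisson_def AC)
    then show ?thesis by simp
  next
    case True
    define N where "N = card A"
    have inA: "Suc i \<in> A" if "i < N" for i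
    proof (rule ccontr)
      assume "Suc i \<notin> A"
      have "A \<subseteq> {1..i}"
      proof
        fix n assume n: "n \<in> A"
        show "n \<in> {1..i}"
        proof (rule ccontr)
          assume "n \<notin> {1..i}"
          with n have "Suc i \<le> n" by (auto simp: A_def)
          with n monoS[of "Suc i" n] have "Suc i \<in> A" by (auto simp: A_def)
          with \<open>Suc i \<notin> A\<close> show False by simp
        qed
      qed
      then have "card A \<le> i" using card_mono[of "{1..i}" A] by simp
      with that show False by (simp add: N_def)
    qed
    have "comp_poisson W Y v \<omega> = (\<Sum>i<N. Y i \<omega>)"
      by (simp add: comp_poisson_def AC N_def)
    then have "ennreal (comp_poisson W Y v \<omega>) = (\<Sum>i<N. ennreal (Y i \<omega>))"
      using Y by (simp add: sum_ennreal)
    also have "\<dots> = (\<Sum>i<N. ennreal (Y i \<omega>) * indicator {..u} (\<Sum>j<Suc i. W j \<omega>))"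
    proof (intro sum.cong refl)
      fix i assume "i \<in> {..<N}"
      then have "Suc i \<in> A" using inA by simp
      then have "(\<Sum>j<Suc i. W j \<omega>) \<le> u" using vu by (simp add: A_def)
      then show "ennreal (Y i \<omega>) = ennreal (Y i \<omega>) * indicator {..u} (\<Sum>j<Suc i. W j \<omega>)" by simp
    qed
    also have "\<dots> \<le> Jp W Y u \<omega>" unfolding Jp_def
      by (rule sum_le_suminf) auto
    finally show ?thesis .
  qed
qed


lemma F_props:
  assumes D: "D \<in> admissible M W Y \<rho> x" and \<omega>: "\<omega> \<in> space M"
  defines "F \<equiv> (\<lambda>t. if t < 0 then 0 else D t \<omega>)"
  shows "\<And>a b. a \<le> b \<Longrightarrow> F a \<le> F b" "\<And>a. continuous (at_right a) F"
proof -
  have D0: "0 \<le> D 0 \<omega>" and mo: "mono_on {0..} (\<lambda>t. D t \<omega>)"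
    and rc: "\<And>t. t \<ge> 0 \<Longrightarrow> continuous (at_right t) (\<lambda>s. D s \<omega>)"
    using D \<omega> by (auto simp: admissible_def)
  show "F a \<le> F b" if "a \<le> b" for a b
  proof -
    have "0 \<le> D b \<omega>" if "0 \<le> b" using mo D0 that unfolding mono_on_def by (metis atLeast_iff order_refl order_trans)
    then show ?thesis using that mo by (auto simp: F_def mono_on_def)
  qed
  show "continuous (at_right a) F" for a
  proof (cases "a < 0")
    case True
    have ev: "eventually (\<lambda>s. F s = 0) (at_right a)"
      unfolding eventually_at_right[OF True] using True by (auto simp: F_def intro!: exI[of _ 0])
    have "F a = 0" using True by (simp add: F_def)
    have "(F \<longlongrightarrow> 0) (at_right a)"
      by (rule tendsto_cong[THEN iffD2, OF ev]) simp
    then show ?thesis unfolding continuous_within using \<open>F a = 0\<close> by simp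
  next
    case False
    have ev: "eventually (\<lambda>s. D s \<omega> = F s) (at_right a)"
      using False by (auto simp: F_def eventually_at_right_less eventually_at_filter intro: eventually_mono[OF eventually_at_right_less])
    have "((\<lambda>s. D s \<omega>) \<longlongrightarrow> D a \<omega>) (at_right a)"
      using rc[of a] False by (simp add: continuous_within)
    then have "(F \<longlongrightarrow> D a \<omega>) (at_right a)" by (rule tendsto_cong[THEN iffD1, OF ev])
    then show ?thesis using False by (simp add: continuous_within F_def)
  qed
qed


lemma pathwise:
  assumes D: "D \<in> admissible M W Y \<rho> x" and \<omega>: "\<omega> \<in> space M"
    and W: "\<And>i. W i \<omega> \<ge> 0" and Y: "\<And>i. Y i \<omega> \<ge> 0"
    and \<delta>: "\<delta> > 0" and \<rho>: "\<rho> \<ge> 0" and T: "T \<ge> 0"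
  defines "\<tau> \<equiv> ruin_time (surplus W Y \<rho> x D) \<omega>"
  shows "disc_dividends \<delta> D \<tau> \<omega> \<le> disc_dividends \<delta> D (min \<tau> (ereal T)) \<omega>
     + (\<integral>\<^sup>+u. ennreal (\<delta> * exp (- \<delta> * u)) * indicator {T..} u * (ennreal x + Jp W Y u \<omega>) \<partial>lborel)"
proof -
  define F where "F = (\<lambda>t. if t < 0 then 0 else D t \<omega>)"
  have Fm: "\<And>a b. a \<le> b \<Longrightarrow> F a \<le> F b" using F_props(1)[OF D \<omega>] by (simp add: F_def)
  have Fc: "\<And>a. continuous (at_right a) F" using F_props(2)[OF D \<omega>] by (simp add: F_def)
  note Fp = Fm Fc
  define \<mu> where "\<mu> = div_measure D \<omega>"
  have \<mu>F: "\<mu> = interval_measure F" by (simp add: \<mu>_def div_measure_def F_def)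
  interpret \<mu>: sigma_finite_measure \<mu> unfolding \<mu>F by (rule sigma_finite_interval_measure) (use Fp in auto)
  interpret pair_sigma_finite \<mu> lborel ..
  have sets_\<mu>[measurable_cong]: "sets \<mu> = sets borel" by (simp add: \<mu>F)
  define A2 where "A2 = {t. T < t \<and> ereal t \<le> \<tau>}"
  have A2m[measurable]: "A2 \<in> sets borel" unfolding A2_def by measurable
  have Sm[measurable]: "{t. 0 \<le> t \<and> ereal t \<le> S} \<in> sets borel" for S unfolding A2_def by measurable
  have "disc_dividends \<delta> D \<tau> \<omega> \<le>
     (\<integral>\<^sup>+t. ennreal (exp (- \<delta> * t)) * indicator {t. 0 \<le> t \<and> ereal t \<le> min \<tau> (ereal T)} t
          + ennreal (exp (- \<delta> * t)) * indicator A2 t \<partial>\<mu>)"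
    unfolding disc_dividends_def \<mu>_def[symmetric]
    by (intro nn_integral_mono) (auto simp: A2_def split: split_indicator)
  also have "\<dots> = disc_dividends \<delta> D (min \<tau> (ereal T)) \<omega> + (\<integral>\<^sup>+t. ennreal (exp (- \<delta> * t)) * indicator A2 t \<partial>\<mu>)"
    unfolding disc_dividends_def \<mu>_def[symmetric]
    by (rule nn_integral_add) auto
  also have "(\<integral>\<^sup>+t. ennreal (exp (- \<delta> * t)) * indicator A2 t \<partial>\<mu>)
      = (\<integral>\<^sup>+t. (\<integral>\<^sup>+u. ennreal (\<delta> * exp (- \<delta> * u)) * indicator {t..} u * indicator A2 t \<partial>lborel) \<partial>\<mu>)"
    by (subst exp_as_integral[OF \<delta>]) (simp add: nn_integral_multc)
  also have "\<dots> = (\<integral>\<^sup>+u. (\<integral>\<^sup>+t. ennreal (\<delta> * exp (- \<delta> * u)) * indicator {t..} u * indicator A2 t \<partial>\<mu>) \<partial>lborel)"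
  proof (rule Fubini'[symmetric])
    have m1: "(\<lambda>x. indicator {fst x..} (snd x) :: ennreal) \<in> borel_measurable (\<mu> \<Otimes>\<^sub>M lborel)"
    proof -
      have e: "(\<lambda>x. indicator {fst x..} (snd x) :: ennreal) = (\<lambda>x. if fst x \<le> snd x then 1 else 0)"
        by (auto simp: fun_eq_iff split: split_indicator)
      have p[measurable]: "Measurable.pred (\<mu> \<Otimes>\<^sub>M lborel) (\<lambda>x. fst x \<le> snd x)"
        by measurable
      show ?thesis unfolding e by measurable
    qed
    have m2: "(\<lambda>x. indicator A2 (fst x) :: ennreal) \<in> borel_measurable (\<mu> \<Otimes>\<^sub>M lborel)"
      by (rule measurable_compose[OF measurable_fst]) (simp add: sets_\<mu>)
    show "(\<lambda>(t, u). ennreal (\<delta> * exp (- \<delta> * u)) * indicator {t..} u * indicator A2 t) \<in> borel_measurable (\<mu> \<Otimes>\<^sub>M lborel)"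
      using m1 m2 by (simp add: case_prod_beta') measurable
  qed
  also have "\<dots> = (\<integral>\<^sup>+u. ennreal (\<delta> * exp (- \<delta> * u)) * emeasure \<mu> ({..u} \<inter> A2) \<partial>lborel)"
  proof (intro nn_integral_cong)
    fix u :: real
    have "(\<integral>\<^sup>+t. ennreal (\<delta> * exp (- \<delta> * u)) * indicator {t..} u * indicator A2 t \<partial>\<mu>)
       = (\<integral>\<^sup>+t. ennreal (\<delta> * exp (- \<delta> * u)) * indicator ({..u} \<inter> A2) t \<partial>\<mu>)"
      by (intro nn_integral_cong) (auto split: split_indicator)
    also have "\<dots> = ennreal (\<delta> * exp (- \<delta> * u)) * emeasure \<mu> ({..u} \<inter> A2)"
      by (subst nn_integral_cmult_indicator) (auto simp: sets_\<mu>)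
    finally show "(\<integral>\<^sup>+t. ennreal (\<delta> * exp (- \<delta> * u)) * indicator {t..} u * indicator A2 t \<partial>\<mu>)
       = ennreal (\<delta> * exp (- \<delta> * u)) * emeasure \<mu> ({..u} \<inter> A2)" .
  qed
  also have "\<dots> \<le> (\<integral>\<^sup>+u. ennreal (\<delta> * exp (- \<delta> * u)) * indicator {T..} u * (ennreal x + Jp W Y u \<omega>) \<partial>lborel)"
  proof (intro nn_integral_mono)
    fix u :: real
    have "emeasure \<mu> ({..u} \<inter> A2) \<le> indicator {T..} u * (ennreal x + Jp W Y u \<omega>)"
    proof (cases "T \<le> u \<and> ereal T < \<tau>")
      case False
      then have "{..u} \<inter> A2 = {}"
        by (auto simp: A2_def) (meson less_eq_ereal_def order_le_less_trans ereal_less(3) ereal_less_eq(3) leD leI order.strict_trans1)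
      then show ?thesis by simp
    next
      case True
      define v where "v = (if ereal u \<le> \<tau> then u else real_of_ereal \<tau>)"
      have vprops: "T \<le> v" "v \<le> u" "ereal v \<le> \<tau>" "{..u} \<inter> A2 \<subseteq> {-1<..v}"
      proof -
        show "T \<le> v" "v \<le> u" "ereal v \<le> \<tau>"
          using True by (cases \<tau>; auto simp: v_def)+
        show "{..u} \<inter> A2 \<subseteq> {-1<..v}"
          using True T by (cases \<tau>) (auto simp: v_def A2_def)
      qed
      have "emeasure \<mu> ({..u} \<inter> A2) \<le> emeasure \<mu> {-1<..v}"
        by (rule emeasure_mono[OF vprops(4)]) (simp add: sets_\<mu>)
      also have "\<dots> = ennreal (F v - F (-1))"
        unfolding \<mu>F using vprops T by (subst emeasure_interval_measure_Ioc) (auto intro: Fp)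
      also have "F v - F (-1) = D v \<omega>" using vprops T by (simp add: F_def)
      also have "D v \<omega> \<le> x + comp_poisson W Y v \<omega>"
      proof -
        have "0 \<le> surplus W Y \<rho> x D v \<omega>"
          using D \<omega> vprops T unfolding admissible_def \<tau>_def by auto
        moreover have "0 \<le> \<rho> * v" using \<rho> vprops T by simp
        ultimately show ?thesis by (simp add: surplus_def)
      qed
      also have "ennreal (x + comp_poisson W Y v \<omega>) \<le> ennreal x + ennreal (comp_poisson W Y v \<omega>)"
        using Y by (simp add: ennreal_plus_if comp_poisson_def sum_nonneg)
      also have "\<dots> \<le> ennreal x + Jp W Y u \<omega>"
        by (intro add_left_mono comp_le_Jp W Y vprops)
      finally show ?thesis using True by (simp add: ennreal_leI)
    qed
    then show "ennreal (\<delta> * exp (- \<delta> * u)) * emeasure \<mu> ({..u} \<inter> A2)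
        \<le> ennreal (\<delta> * exp (- \<delta> * u)) * indicator {T..} u * (ennreal x + Jp W Y u \<omega>)"
      by (simp add: mult.assoc mult_left_mono)
  qed
  finally show ?thesis by (simp add: add_left_mono)
qed


lemma erlang_density_sum:
  fixes l s :: real assumes "l > 0" "s \<ge> 0"
  shows "(\<Sum>n. ennreal (erlang_density n l s)) = ennreal l"
proof -
  have "(\<lambda>n. (l * s) ^ n / fact n) sums exp (l * s)"
    using exp_converges[of "l * s"] by (simp add: divide_inverse mult.commute scaleR_conv_of_real)
  then have "(\<lambda>n. l * exp (- l * s) * ((l * s) ^ n / fact n)) sums (l * exp (- l * s) * exp (l * s))"
    by (rule sums_mult)
  moreover have "l * exp (- l * s) * exp (l * s) = l" by (simp add: exp_minus field_simps)
  moreover have "l * exp (- l * s) * ((l * s) ^ n / fact n) = erlang_density n l s" for n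
    using assms by (simp add: erlang_density_def power_mult_distrib field_simps)
  ultimately have "(\<lambda>n. erlang_density n l s) sums l"
    by (metis (no_types, lifting) sums_cong)
  then show ?thesis
    by (intro suminf_ennreal_eq) (use assms in auto)
qed

lemma erlang_CDF_sum:
  fixes l u :: real assumes "l > 0" "u \<ge> 0"
  shows "(\<Sum>n. ennreal (erlang_CDF n l u)) = ennreal (l * u)"
proof -
  have "(\<Sum>n. ennreal (erlang_CDF n l u)) = (\<Sum>n. \<integral>\<^sup>+ x. ennreal (erlang_density n l x) * indicator {..u} x \<partial>lborel)"
    using nn_integral_erlang_density[OF assms(1)] by simp
  also have "\<dots> = (\<integral>\<^sup>+ x. (\<Sum>n. ennreal (erlang_density n l x) * indicator {..u} x) \<partial>lborel)"
    by (rule nn_integral_suminf[symmetric]) measurable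
  also have "\<dots> = (\<integral>\<^sup>+ x. ennreal l * indicator {0..u} x \<partial>lborel)"
  proof (intro nn_integral_cong)
    fix x :: real
    show "(\<Sum>n. ennreal (erlang_density n l x) * indicator {..u} x) = ennreal l * indicator {0..u} x"
    proof (cases "0 \<le> x")
      case True then show ?thesis using erlang_density_sum[OF assms(1) True]
        by (simp add: ennreal_suminf_multc split: split_indicator)
    next
      case False then show ?thesis by (simp add: erlang_density_def split: split_indicator)
    qed
  qed
  also have "\<dots> = ennreal (l * u)" using assms
    by (simp add: nn_integral_cmult_indicator ennreal_mult)
  finally show ?thesis .
qed


lemma expect_term:
  fixes M :: "'a measure" and W Y :: "nat \<Rightarrow> 'a \<Rightarrow> real"
  assumes P: "prob_space M" and lam: "lam > 0"
    and indG: "prob_space.indep_vars M (\<lambda>_. borel)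
           (\<lambda>k. case k of Inl i \<Rightarrow> W i | Inr i \<Rightarrow> Y i) (UNIV :: (nat + nat) set)"
    and Wd: "\<And>i. distributed M lborel (W i) (\<lambda>s. ennreal (exponential_density lam s))"
    and u: "u \<ge> 0"
  shows "(\<integral>\<^sup>+\<omega>. ennreal (Y i \<omega>) * indicator {..u} (\<Sum>j<Suc i. W j \<omega>) \<partial>M)
       = (\<integral>\<^sup>+\<omega>. ennreal (Y i \<omega>) \<partial>M) * ennreal (erlang_CDF i lam u)"
proof -
  interpret prob_space M by (rule P)
  define G where "G = (\<lambda>k. case k of Inl i \<Rightarrow> W i | Inr i \<Rightarrow> Y i)"
  have indG': "indep_vars (\<lambda>_. borel) G UNIV" using indG by (simp add: G_def)
  define S where "S = (\<lambda>\<omega>. \<Sum>j<Suc i. W j \<omega>)"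
  have Ssum: "(\<lambda>\<omega>. \<Sum>k\<in>Inl ` {..<Suc i}. G k \<omega>) = S"
    by (simp add: sum.reindex G_def S_def)
  have ind1: "indep_var borel (Y i) borel S"
  proof -
    have "indep_var borel (G (Inr i)) borel (\<lambda>\<omega>. \<Sum>k\<in>Inl ` {..<Suc i}. G k \<omega>)"
      by (rule indep_vars_sum) (auto intro: indep_vars_subset[OF indG'])
    then show ?thesis unfolding Ssum by (simp add: G_def)
  qed
  define X :: "bool \<Rightarrow> 'a \<Rightarrow> ennreal" where
    "X = case_bool (\<lambda>\<omega>. ennreal (Y i \<omega>)) (\<lambda>\<omega>. indicator {..u} (S \<omega>))"
  have ind2: "indep_var borel ((\<lambda>y. ennreal y) \<circ> Y i) borel ((\<lambda>s. indicator {..u} s :: ennreal) \<circ> S)"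
    by (rule indep_var_compose[OF ind1]) auto
  have cb: "case_bool borel borel = (\<lambda>_::bool. (borel :: ennreal measure))"
    by (auto simp: fun_eq_iff split: bool.split)
  have indX: "indep_vars (\<lambda>_. borel) X UNIV"
    using ind2 unfolding indep_var_def X_def cb by (simp add: comp_def)
  have "(\<integral>\<^sup>+\<omega>. (\<Prod>b\<in>UNIV. X b \<omega>) \<partial>M) = (\<Prod>b\<in>UNIV. \<integral>\<^sup>+\<omega>. X b \<omega> \<partial>M)"
    by (rule indep_vars_nn_integral[OF _ indX]) auto
  moreover have "(\<lambda>\<omega>. (\<Prod>b\<in>UNIV. X b \<omega>)) = (\<lambda>\<omega>. ennreal (Y i \<omega>) * indicator {..u} (S \<omega>))"
    by (auto simp: fun_eq_iff UNIV_bool X_def mult.commute)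
  moreover have "(\<Prod>b\<in>UNIV. \<integral>\<^sup>+\<omega>. X b \<omega> \<partial>M)
     = (\<integral>\<^sup>+\<omega>. ennreal (Y i \<omega>) \<partial>M) * (\<integral>\<^sup>+\<omega>. indicator {..u} (S \<omega>) \<partial>M)"
    by (simp add: UNIV_bool X_def mult.commute)
  moreover have "(\<integral>\<^sup>+\<omega>. indicator {..u} (S \<omega>) \<partial>M) = ennreal (erlang_CDF i lam u)"
  proof -
    have distS: "distributed M lborel S (erlang_density i lam)"
    proof -
      have p1: "indep_vars (\<lambda>_. borel) G (Inl ` {..<Suc i})" by (rule indep_vars_subset[OF indG']) auto
      have p2: "\<And>k. k \<in> Inl ` {..<Suc i} \<Longrightarrow> distributed M lborel (G k) (erlang_density ((\<lambda>_. 0) k) lam)"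
        using Wd by (auto simp: G_def)
      note erlang_distributed_sum[OF _ _ lam p2 p1]
      then show ?thesis by (simp add: Ssum card_image lessThan_empty_iff)
    qed
    have Sm[measurable]: "S \<in> borel_measurable M"
      using distributed_measurable[OF distS] by simp
    have "(\<integral>\<^sup>+\<omega>. indicator {..u} (S \<omega>) \<partial>M) = (\<integral>\<^sup>+\<omega>. indicator {\<omega>\<in>space M. S \<omega> \<le> u} \<omega> \<partial>M)"
      by (intro nn_integral_cong) (auto split: split_indicator)
    also have "\<dots> = emeasure M {\<omega>\<in>space M. S \<omega> \<le> u}" by (rule nn_integral_indicator) measurable
    also have "\<dots> = ennreal (prob {\<omega>\<in>space M. S \<omega> \<le> u})" by (simp add: emeasure_eq_measure)
    also have "prob {\<omega>\<in>space M. S \<omega> \<le> u} = erlang_CDF i lam u"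
      by (rule erlang_distributed_le[OF distS lam u])
    finally show ?thesis .
  qed
  ultimately show ?thesis by (simp add: S_def)
qed


lemma AE_nonneg_dist:
  fixes X :: "'a \<Rightarrow> real"
  assumes d: "distributed M lborel X f" and z: "\<And>y. y < 0 \<Longrightarrow> f y = 0"
  shows "AE \<omega> in M. 0 \<le> X \<omega>"
proof -
  have Xm[measurable]: "X \<in> borel_measurable M" using distributed_measurable[OF d] by simp
  have "emeasure M (X -` {..<0} \<inter> space M) = (\<integral>\<^sup>+y. f y * indicator {..<0} y \<partial>lborel)"
    by (rule distributed_emeasure[OF d]) simp
  also have "\<dots> = 0" by (intro nn_integral_zero') (auto simp: z split: split_indicator)
  finally have "emeasure M {\<omega>\<in>space M. \<not> 0 \<le> X \<omega>} = 0"
    by (simp add: vimage_def Int_def not_le conj_commute)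
  then show ?thesis by (subst AE_iff_measurable[OF _ refl]) auto
qed

lemma nn_integral_same_dist:
  fixes X Z :: "'a \<Rightarrow> real"
  assumes d1: "distributed M lborel X f" and d2: "distributed M lborel Z f"
  shows "(\<integral>\<^sup>+\<omega>. ennreal (X \<omega>) \<partial>M) = (\<integral>\<^sup>+\<omega>. ennreal (Z \<omega>) \<partial>M)"
proof -
  have [measurable]: "X \<in> borel_measurable M" "Z \<in> borel_measurable M"
    using distributed_measurable[OF d1] distributed_measurable[OF d2] by auto
  have "(\<integral>\<^sup>+\<omega>. ennreal (X \<omega>) \<partial>M) = (\<integral>\<^sup>+y. ennreal y \<partial>distr M lborel X)"
    by (subst nn_integral_distr) auto
  also have "\<dots> = (\<integral>\<^sup>+y. ennreal y \<partial>distr M lborel Z)"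
    using distributed_distr_eq_density[OF d1] distributed_distr_eq_density[OF d2] by simp
  also have "\<dots> = (\<integral>\<^sup>+\<omega>. ennreal (Z \<omega>) \<partial>M)"
    by (subst nn_integral_distr) auto
  finally show ?thesis .
qed


lemma expect_H:
  fixes M :: "'a measure" and W Y :: "nat \<Rightarrow> 'a \<Rightarrow> real" and p :: "real \<Rightarrow> real"
  assumes P: "prob_space M" and lam: "lam > 0" and \<delta>: "\<delta> > 0"
    and indG: "prob_space.indep_vars M (\<lambda>_. borel)
           (\<lambda>k. case k of Inl i \<Rightarrow> W i | Inr i \<Rightarrow> Y i) (UNIV :: (nat + nat) set)"
    and Wd: "\<And>i. distributed M lborel (W i) (\<lambda>s. ennreal (exponential_density lam s))"
    and Yd: "\<And>i. distributed M lborel (Y i) (\<lambda>y. ennreal (p y))"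
    and p0: "\<And>y. y \<le> 0 \<Longrightarrow> p y = 0"
    and intY: "integrable M (Y 0)"
    and x: "x \<ge> 0" and T: "T \<ge> 0"
  shows "(\<integral>\<^sup>+\<omega>. (\<integral>\<^sup>+u. ennreal (\<delta> * exp (- \<delta> * u)) * indicator {T..} u * (ennreal x + Jp W Y u \<omega>) \<partial>lborel) \<partial>M)
     = ennreal ((x + lam * (\<integral>\<omega>. Y 0 \<omega> \<partial>M) * T) * exp (- \<delta> * T)
                       + lam * (\<integral>\<omega>. Y 0 \<omega> \<partial>M) / \<delta> * exp (- \<delta> * T))"
proof -
  interpret prob_space M by (rule P)
  define \<mu> where "\<mu> = (\<integral>\<omega>. Y 0 \<omega> \<partial>M)"
  have Wm[measurable]: "\<And>i. W i \<in> borel_measurable M" using Wd distributed_measurable by fastforce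
  have Ym[measurable]: "\<And>i. Y i \<in> borel_measurable M" using Yd distributed_measurable by fastforce
  have Jm[measurable]: "Jp W Y u \<in> borel_measurable M" for u unfolding Jp_def by measurable
  have Pm[measurable]: "Measurable.pred (borel \<Otimes>\<^sub>M M) (\<lambda>x. (\<Sum>j<Suc i. W j (snd x)) \<in> {..fst x})" for i
  proof -
    have "Measurable.pred (borel \<Otimes>\<^sub>M M) (\<lambda>x. (\<Sum>j<Suc i. W j (snd x)) \<le> fst x)" by measurable
    then show ?thesis by simp
  qed
  have Ynn: "AE \<omega> in M. 0 \<le> Y i \<omega>" for i
    by (rule AE_nonneg_dist[OF Yd]) (simp add: p0)
  have \<mu>0: "0 \<le> \<mu>" unfolding \<mu>_def using Ynn[of 0] by (rule integral_nonneg_AE)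
  have EY: "(\<integral>\<^sup>+\<omega>. ennreal (Y i \<omega>) \<partial>M) = ennreal \<mu>" for i
  proof -
    have "(\<integral>\<^sup>+\<omega>. ennreal (Y i \<omega>) \<partial>M) = (\<integral>\<^sup>+\<omega>. ennreal (Y 0 \<omega>) \<partial>M)"
      by (rule nn_integral_same_dist[OF Yd Yd])
    also have "\<dots> = ennreal \<mu>" unfolding \<mu>_def
      by (rule nn_integral_eq_integral[OF intY Ynn])
    finally show ?thesis .
  qed
  interpret pair_sigma_finite lborel M ..
  have inner: "(\<integral>\<^sup>+\<omega>. ennreal (\<delta> * exp (- \<delta> * u)) * indicator {T..} u * (ennreal x + Jp W Y u \<omega>) \<partial>M)
     = ennreal (\<delta> * exp (- \<delta> * u) * (x + lam * \<mu> * u)) * indicator {T..} u" for u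
  proof (cases "T \<le> u")
    case False then show ?thesis by simp
  next
    case True
    then have u0: "0 \<le> u" using T by simp
    have "(\<integral>\<^sup>+\<omega>. Jp W Y u \<omega> \<partial>M) = (\<Sum>i. \<integral>\<^sup>+\<omega>. ennreal (Y i \<omega>) * indicator {..u} (\<Sum>j<Suc i. W j \<omega>) \<partial>M)"
      unfolding Jp_def by (rule nn_integral_suminf) measurable
    also have "\<dots> = (\<Sum>i. ennreal \<mu> * ennreal (erlang_CDF i lam u))"
      by (simp only: expect_term[OF P lam indG Wd u0] EY)
    also have "\<dots> = ennreal \<mu> * ennreal (lam * u)"
      by (simp add: ennreal_suminf_cmult erlang_CDF_sum[OF lam u0])
    finally have EJ: "(\<integral>\<^sup>+\<omega>. Jp W Y u \<omega> \<partial>M) = ennreal (lam * \<mu> * u)"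
      using \<mu>0 lam u0 by (simp add: ennreal_mult[symmetric] mult_ac)
    have "(\<integral>\<^sup>+\<omega>. ennreal (\<delta> * exp (- \<delta> * u)) * indicator {T..} u * (ennreal x + Jp W Y u \<omega>) \<partial>M)
       = ennreal (\<delta> * exp (- \<delta> * u)) * (\<integral>\<^sup>+\<omega>. ennreal x + Jp W Y u \<omega> \<partial>M)"
      using True by (subst nn_integral_cmult[symmetric]) auto
    also have "(\<integral>\<^sup>+\<omega>. ennreal x + Jp W Y u \<omega> \<partial>M) = ennreal x + ennreal (lam * \<mu> * u)"
      by (subst nn_integral_add) (auto simp: EJ emeasure_space_1)
    also have "\<dots> = ennreal (x + lam * \<mu> * u)" using x \<mu>0 lam u0 by (simp add: ennreal_plus)
    moreover have "ennreal (\<delta> * exp (- \<delta> * u)) * ennreal (x + lam * \<mu> * u) = ennreal (\<delta> * exp (- \<delta> * u) * (x + lam * \<mu> * u))"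
      using \<delta> by (intro ennreal_mult[symmetric]) (use x \<mu>0 lam u0 in auto)
    ultimately show ?thesis using True by simp
  qed
  have "(\<integral>\<^sup>+\<omega>. (\<integral>\<^sup>+u. ennreal (\<delta> * exp (- \<delta> * u)) * indicator {T..} u * (ennreal x + Jp W Y u \<omega>) \<partial>lborel) \<partial>M)
      = (\<integral>\<^sup>+u. (\<integral>\<^sup>+\<omega>. ennreal (\<delta> * exp (- \<delta> * u)) * indicator {T..} u * (ennreal x + Jp W Y u \<omega>) \<partial>M) \<partial>lborel)"
    by (rule Fubini') (unfold Jp_def, measurable)
  also have "\<dots> = (\<integral>\<^sup>+u. ennreal (\<delta> * exp (- \<delta> * u) * (x + lam * \<mu> * u)) * indicator {T..} u \<partial>lborel)"
    by (rule nn_integral_cong) (rule inner)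
  also have "\<dots> = ennreal ((x + lam * \<mu> * T) * exp (- \<delta> * T) + lam * \<mu> / \<delta> * exp (- \<delta> * T))"
    by (rule tail_integral) (use \<delta> x \<mu>0 lam T in auto)
  finally show ?thesis by (simp add: \<mu>_def)
qed


lemma disc_mono:
  "S \<le> S' \<Longrightarrow> disc_dividends \<delta> D S \<omega> \<le> disc_dividends \<delta> D S' \<omega>"
  unfolding disc_dividends_def
  by (intro nn_integral_mono) (auto split: split_indicator intro: order_trans)

theorem theorem2p4:
  fixes M :: "'a measure" and W Y :: "nat \<Rightarrow> 'a \<Rightarrow> real" and p :: "real \<Rightarrow> real"
    and \<rho> lam \<delta> x T :: real
  assumes "prob_space M"
    and "\<rho> > 0" and "lam > 0" and "\<delta> > 0"
    and "prob_space.indep_vars M (\<lambda>_. borel)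
           (\<lambda>k. case k of Inl i \<Rightarrow> W i | Inr i \<Rightarrow> Y i) (UNIV :: (nat + nat) set)"
    and "\<And>i. distributed M lborel (W i) (\<lambda>s. ennreal (exponential_density lam s))"
    and "\<And>i. distributed M lborel (Y i) (\<lambda>y. ennreal (p y))"
    and "\<And>y. y \<le> 0 \<Longrightarrow> p y = 0"
    and "integrable M (Y 0)"
    and "lam * (\<integral>\<omega>. Y 0 \<omega> \<partial>M) > \<rho>"
    and "x > 0" and "T > 0"
  shows "value_fn M W Y \<rho> \<delta> x (ereal T) \<le> value_fn M W Y \<rho> \<delta> x \<infinity>
            + ennreal ((x + lam * (\<integral>\<omega>. Y 0 \<omega> \<partial>M) * T) * exp (- \<delta> * T)
                       + lam * (\<integral>\<omega>. Y 0 \<omega> \<partial>M) / \<delta> * exp (- \<delta> * T))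
       \<and> value_fn M W Y \<rho> \<delta> x \<infinity> \<le> value_fn M W Y \<rho> \<delta> x (ereal T)
            + ennreal ((x + lam * (\<integral>\<omega>. Y 0 \<omega> \<partial>M) * T) * exp (- \<delta> * T)
                       + lam * (\<integral>\<omega>. Y 0 \<omega> \<partial>M) / \<delta> * exp (- \<delta> * T))"
proof -
  note P = assms(1) and \<rho> = assms(2) and lam = assms(3) and \<delta> = assms(4) and indG = assms(5)
    and Wd = assms(6) and Yd = assms(7) and p0 = assms(8) and intY = assms(9)
    and x = assms(11) and T = assms(12)
  interpret prob_space M by (rule P)
  define c where "c = ennreal ((x + lam * (\<integral>\<omega>. Y 0 \<omega> \<partial>M) * T) * exp (- \<delta> * T)
                       + lam * (\<integral>\<omega>. Y 0 \<omega> \<partial>M) / \<delta> * exp (- \<delta> * T))"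
  define H where "H \<omega> = (\<integral>\<^sup>+u. ennreal (\<delta> * exp (- \<delta> * u)) * indicator {T..} u * (ennreal x + Jp W Y u \<omega>) \<partial>lborel)" for \<omega>
  have Wm[measurable]: "\<And>i. W i \<in> borel_measurable M" using Wd distributed_measurable by fastforce
  have Ym[measurable]: "\<And>i. Y i \<in> borel_measurable M" using Yd distributed_measurable by fastforce
  have Pm[measurable]: "Measurable.pred (M \<Otimes>\<^sub>M borel) (\<lambda>x. (\<Sum>j<Suc i. W j (fst x)) \<in> {..snd x})" for i
  proof -
    have "Measurable.pred (M \<Otimes>\<^sub>M borel) (\<lambda>x. (\<Sum>j<Suc i. W j (fst x)) \<le> snd x)" by measurable
    then show ?thesis by simp
  qed
  have Hm: "H \<in> borel_measurable M"
    unfolding H_def Jp_def by measurable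
  have EH: "integral\<^sup>N M H = c"
    unfolding H_def c_def
    by (rule expect_H[OF P lam \<delta> indG Wd Yd p0 intY]) (use x T in auto)
  have good: "AE \<omega> in M. \<forall>i. 0 \<le> W i \<omega> \<and> 0 \<le> Y i \<omega>"
  proof (subst AE_all_countable, intro allI AE_conjI)
    fix i
    show "AE \<omega> in M. 0 \<le> W i \<omega>" by (rule AE_nonneg_dist[OF Wd]) (simp add: exponential_density_def)
    show "AE \<omega> in M. 0 \<le> Y i \<omega>" by (rule AE_nonneg_dist[OF Yd]) (simp add: p0)
  qed
  have part1: "value_fn M W Y \<rho> \<delta> x (ereal T) \<le> value_fn M W Y \<rho> \<delta> x \<infinity>"
    unfolding value_fn_def
  proof (intro SUP_mono)
    fix D assume "D \<in> admissible M W Y \<rho> x"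
    then show "\<exists>m\<in>admissible M W Y \<rho> x. (\<integral>\<^sup>+\<omega>. disc_dividends \<delta> D (min (ruin_time (surplus W Y \<rho> x D) \<omega>) (ereal T)) \<omega> \<partial>M)
       \<le> (\<integral>\<^sup>+\<omega>. disc_dividends \<delta> m (min (ruin_time (surplus W Y \<rho> x m) \<omega>) \<infinity>) \<omega> \<partial>M)"
      by (intro bexI[of _ D] nn_integral_mono disc_mono) auto
  qed
  have part2: "value_fn M W Y \<rho> \<delta> x \<infinity> \<le> value_fn M W Y \<rho> \<delta> x (ereal T) + c"
    unfolding value_fn_def[of _ _ _ _ _ _ \<infinity>]
  proof (rule SUP_least)
    fix D assume D: "D \<in> admissible M W Y \<rho> x"
    define \<tau> where "\<tau> \<omega> = ruin_time (surplus W Y \<rho> x D) \<omega>" for \<omega>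
    have "(\<integral>\<^sup>+\<omega>. disc_dividends \<delta> D (min (ruin_time (surplus W Y \<rho> x D) \<omega>) \<infinity>) \<omega> \<partial>M)
        \<le> (\<integral>\<^sup>+\<omega>. disc_dividends \<delta> D (min (\<tau> \<omega>) (ereal T)) \<omega> + H \<omega> \<partial>M)"
    proof (rule nn_integral_mono_AE)
      show "AE \<omega> in M. disc_dividends \<delta> D (min (ruin_time (surplus W Y \<rho> x D) \<omega>) \<infinity>) \<omega>
          \<le> disc_dividends \<delta> D (min (\<tau> \<omega>) (ereal T)) \<omega> + H \<omega>"
        using good
      proof (rule AE_mp[OF _ AE_I2], intro impI)
        fix \<omega> assume \<omega>: "\<omega> \<in> space M" and g: "\<forall>i. 0 \<le> W i \<omega> \<and> 0 \<le> Y i \<omega>"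
        show "disc_dividends \<delta> D (min (ruin_time (surplus W Y \<rho> x D) \<omega>) \<infinity>) \<omega>
          \<le> disc_dividends \<delta> D (min (\<tau> \<omega>) (ereal T)) \<omega> + H \<omega>"
          using pathwise[OF D \<omega> _ _ \<delta> _ _, of T] g \<rho> T unfolding H_def \<tau>_def by auto
      qed
    qed
    also have "\<dots> \<le> (\<integral>\<^sup>+\<omega>. disc_dividends \<delta> D (min (\<tau> \<omega>) (ereal T)) \<omega> \<partial>M) + integral\<^sup>N M H"
      by (rule nn_integral_add_le_meas[OF Hm])
    also have "\<dots> \<le> (SUP D\<in>admissible M W Y \<rho> x. \<integral>\<^sup>+\<omega>. disc_dividends \<delta> D (min (ruin_time (surplus W Y \<rho> x D) \<omega>) (ereal T)) \<omega> \<partial>M) + c"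
      unfolding EH \<tau>_def by (intro add_right_mono SUP_upper D)
    finally show "(\<integral>\<^sup>+\<omega>. disc_dividends \<delta> D (min (ruin_time (surplus W Y \<rho> x D) \<omega>) \<infinity>) \<omega> \<partial>M)
        \<le> value_fn M W Y \<rho> \<delta> x (ereal T) + c" by (simp add: value_fn_def)
  qed
  have "value_fn M W Y \<rho> \<delta> x (ereal T) \<le> value_fn M W Y \<rho> \<delta> x \<infinity> + c"
    using part1 by (simp add: add_increasing2)
  with part2 show ?thesis by (simp add: c_def)
qed

end
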